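(* Let $\mathcal{G}=(\mathcal{V},\mathcal{E})$ be a directed graph with terminals $s,t$, $f:2^{\mathcal{E}}\to\mathbb{R}_+$ normalized, monotone nondecreasing and submodular, and $C^*$ an $(s,t)$-cut minimizing $f$. Consider the deterministic greedy heuristic: start with $C=\emptyset$, $y=0\in\{0,1\}^{\mathcal{E}}$; while the shortest $(s,t)$-path $P_{\min}$ with respect to edge lengths $y$ has $\sum_{e\in P_{\min}}y(e)<1$, add to $C$ an edge of $P_{\min}$ with minimum marginal cost $f(e\mid C)$ and set its $y$-value to $1$; let $\widehat C_d$ be the returned solution. Then $f(\widehat C_d)\le |\widehat C_d|\,f(C^* )$, and this approximation factor cannot be improved in general.
   Context: An $(s,t)$-cut is a set of edges whose removal disconnects all $s$-$t$ paths. $f(e\mid C)=f(C\cup\{e\})-f(C)$. *)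

theory Defs
  imports Main "HOL.Real"
begin

definition st_path :: "('v \<times> 'v) set \<Rightarrow> 'v \<Rightarrow> 'v \<Rightarrow> ('v \<times> 'v) list \<Rightarrow> bool" where
  "st_path E s t P \<longleftrightarrow>
     (\<exists>vs. vs \<noteq> [] \<and> distinct vs \<and> hd vs = s \<and> last vs = t \<and>
           P = zip vs (tl vs) \<and> set P \<subseteq> E)"

definition st_cut :: "('v \<times> 'v) set \<Rightarrow> 'v \<Rightarrow> 'v \<Rightarrow> ('v \<times> 'v) set \<Rightarrow> bool" where
  "st_cut E s t C \<longleftrightarrow> C \<subseteq> E \<and> (\<forall>P. st_path E s t P \<longrightarrow> set P \<inter> C \<noteq> {})"

definition min_st_cut :: "('v \<times> 'v) set \<Rightarrow> 'v \<Rightarrow> 'v \<Rightarrow> (('v \<times> 'v) set \<Rightarrow> real)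
    \<Rightarrow> ('v \<times> 'v) set \<Rightarrow> bool" where
  "min_st_cut E s t f C \<longleftrightarrow> st_cut E s t C \<and> (\<forall>C'. st_cut E s t C' \<longrightarrow> f C \<le> f C')"

definition normalized_nonneg :: "'e set \<Rightarrow> ('e set \<Rightarrow> real) \<Rightarrow> bool" where
  "normalized_nonneg E f \<longleftrightarrow> f {} = 0 \<and> (\<forall>A. A \<subseteq> E \<longrightarrow> 0 \<le> f A)"

definition monotone_setfun :: "'e set \<Rightarrow> ('e set \<Rightarrow> real) \<Rightarrow> bool" where
  "monotone_setfun E f \<longleftrightarrow> (\<forall>A B. A \<subseteq> B \<longrightarrow> B \<subseteq> E \<longrightarrow> f A \<le> f B)"

definition submodular :: "'e set \<Rightarrow> ('e set \<Rightarrow> real) \<Rightarrow> bool" where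
  "submodular E f \<longleftrightarrow>
     (\<forall>A B. A \<subseteq> E \<longrightarrow> B \<subseteq> E \<longrightarrow> f (A \<union> B) + f (A \<inter> B) \<le> f A + f B)"

definition marginal :: "('e set \<Rightarrow> real) \<Rightarrow> 'e \<Rightarrow> 'e set \<Rightarrow> real" where
  "marginal f e C = f (insert e C) - f C"

text \<open>Edge lengths y \<in> {0,1}^E: y(e) = 1 iff e has been added to C.\<close>
definition ylen :: "('v \<times> 'v) set \<Rightarrow> ('v \<times> 'v) list \<Rightarrow> real" where
  "ylen C P = (\<Sum>e\<leftarrow>P. if e \<in> C then 1 else 0)"

definition shortest_st_path :: "('v \<times> 'v) set \<Rightarrow> 'v \<Rightarrow> 'v \<Rightarrow> ('v \<times> 'v) set
    \<Rightarrow> ('v \<times> 'v) list \<Rightarrow> bool" where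
  "shortest_st_path E s t C P \<longleftrightarrow>
     st_path E s t P \<and> (\<forall>Q. st_path E s t Q \<longrightarrow> ylen C P \<le> ylen C Q)"

text \<open>One iteration of the deterministic greedy heuristic (any tie-breaking):
  a shortest path P_min with length < 1 exists, and an edge of P_min with
  minimum marginal cost is added to C.\<close>
definition greedy_step :: "('v \<times> 'v) set \<Rightarrow> 'v \<Rightarrow> 'v \<Rightarrow> (('v \<times> 'v) set \<Rightarrow> real)
    \<Rightarrow> ('v \<times> 'v) set \<Rightarrow> ('v \<times> 'v) set \<Rightarrow> bool" where
  "greedy_step E s t f C C' \<longleftrightarrow>
     (\<exists>P e. shortest_st_path E s t C P \<and> ylen C P < 1 \<and> e \<in> set P \<and>
            (\<forall>e'\<in>set P. marginal f e C \<le> marginal f e' C) \<and> C' = insert e C)"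

definition greedy_stops :: "('v \<times> 'v) set \<Rightarrow> 'v \<Rightarrow> 'v \<Rightarrow> ('v \<times> 'v) set \<Rightarrow> bool" where
  "greedy_stops E s t C \<longleftrightarrow> \<not> (\<exists>P. shortest_st_path E s t C P \<and> ylen C P < 1)"

definition greedy_output :: "('v \<times> 'v) set \<Rightarrow> 'v \<Rightarrow> 'v \<Rightarrow> (('v \<times> 'v) set \<Rightarrow> real)
    \<Rightarrow> ('v \<times> 'v) set \<Rightarrow> bool" where
  "greedy_output E s t f Ch \<longleftrightarrow> (greedy_step E s t f)\<^sup>*\<^sup>* {} Ch \<and> greedy_stops E s t Ch"

definition cut_instance :: "'v set \<Rightarrow> ('v \<times> 'v) set \<Rightarrow> 'v \<Rightarrow> 'v \<Rightarrow> (('v \<times> 'v) set \<Rightarrow> real) \<Rightarrow> bool" where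
  "cut_instance V E s t f \<longleftrightarrow> finite V \<and> E \<subseteq> V \<times> V \<and> s \<in> V \<and> t \<in> V \<and> s \<noteq> t \<and>
     normalized_nonneg E f \<and> monotone_setfun E f \<and> submodular E f"

end

theory Submission
  imports Defs
begin

lemma ylen_Cons: "ylen C (x#P) = (if x \<in> C then 1 else 0) + ylen C P"
  by (simp add: ylen_def)

lemma ylen_nonneg: "0 \<le> ylen C P"
  by (induct P) (simp_all add: ylen_Cons, simp add: ylen_def)

lemma ylen_ge1: "e \<in> set P \<Longrightarrow> e \<in> C \<Longrightarrow> 1 \<le> ylen C P"
proof (induct P)
  case Nil then show ?case by simp
next
  case (Cons a P)
  show ?case using Cons ylen_nonneg[of C P] by (auto simp: ylen_Cons)
qed

lemma ylen_disj: "ylen C P < 1 \<Longrightarrow> set P \<inter> C = {}"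
  using ylen_ge1 by fastforce

lemma part1:
  assumes ci: "cut_instance V E s t f" and mc: "min_st_cut E s t f Cstar"
    and r: "(greedy_step E s t f)\<^sup>*\<^sup>* {} Ch"
  shows "finite Ch \<and> Ch \<subseteq> E \<and> f Ch \<le> real (card Ch) * f Cstar"
  using r
proof (induction rule: rtranclp_induct)
  case base show ?case using ci by (simp add: cut_instance_def normalized_nonneg_def)
next
  case (step C C')
  from step.hyps(2) obtain P e where sp: "shortest_st_path E s t C P" and yl: "ylen C P < 1"
    and eP: "e \<in> set P" and mn: "\<forall>e'\<in>set P. marginal f e C \<le> marginal f e' C"
    and C': "C' = insert e C" unfolding greedy_step_def by blast
  have pth: "st_path E s t P" using sp unfolding shortest_st_path_def by (rule conjunct1)
  have PE: "set P \<subseteq> E" using pth unfolding st_path_def by blast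
  have disj: "set P \<inter> C = {}" using yl ylen_disj by blast
  obtain es where es: "es \<in> set P" "es \<in> Cstar" using mc pth unfolding min_st_cut_def st_cut_def by blast
  have CsE: "Cstar \<subseteq> E" using mc by (simp add: min_st_cut_def st_cut_def)
  have IH: "finite C" "C \<subseteq> E" "f C \<le> real (card C) * f Cstar" using step.IH by auto
  have sub: "submodular E f" and mono: "monotone_setfun E f" and nn: "normalized_nonneg E f"
    using ci by (auto simp: cut_instance_def)
  have esC: "es \<notin> C" "e \<notin> C" using disj es eP by auto
  have esE: "{es} \<subseteq> E" using es PE by auto
  have "f (C \<union> {es}) + f (C \<inter> {es}) \<le> f C + f {es}"
    using sub IH(2) esE unfolding submodular_def by blast
  moreover have "C \<inter> {es} = {}" using esC by auto
  ultimately have m1: "marginal f es C \<le> f {es}" using nn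
    by (simp add: marginal_def normalized_nonneg_def)
  have sub1: "{es} \<subseteq> Cstar" using es(2) by simp
  have m2: "f {es} \<le> f Cstar" using mono[unfolded monotone_setfun_def, rule_format, OF sub1 CsE] .
  have m3: "marginal f e C \<le> marginal f es C" using mn es(1) by blast
  have "f C' = f C + marginal f e C" using C' by (simp add: marginal_def)
  also have "\<dots> \<le> real (card C) * f Cstar + f Cstar" using m1 m2 m3 IH by linarith
  also have "\<dots> = real (card C') * f Cstar" using C' IH(1) esC by (simp add: algebra_simps)
  finally have fin: "f C' \<le> real (card C') * f Cstar" .
  have "C' \<subseteq> E" using C' IH(2) PE eP by blast
  then show ?case using C' IH(1) fin by simp
qed


definition Tk :: "nat \<Rightarrow> (nat \<times> nat) set" where "Tk k = (\<lambda>v. (0,v)) ` {2..<k+2}"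
definition Bk :: "nat \<Rightarrow> (nat \<times> nat) set" where "Bk k = (\<lambda>v. (v,1)) ` {2..<k+2}"
definition Ek :: "nat \<Rightarrow> (nat \<times> nat) set" where "Ek k = Tk k \<union> Bk k"
definition fk :: "nat \<Rightarrow> real \<Rightarrow> (nat \<times> nat) set \<Rightarrow> real" where
  "fk k c A = (if A \<inter> Tk k \<noteq> {} then c else 0) + real (card (A \<inter> Bk k))"

lemma finB: "finite (Bk k)" by (simp add: Bk_def)
lemma cardB: "card (Bk k) = k" by (simp add: Bk_def card_image inj_on_def)
lemma TB_disj: "Tk k \<inter> Bk k = {}" by (auto simp: Tk_def Bk_def)

lemma paths_k: "st_path (Ek k) 0 1 P \<longleftrightarrow> (\<exists>v. 2 \<le> v \<and> v < k+2 \<and> P = [(0,v),(v,1)])"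
proof
  assume "st_path (Ek k) 0 1 P"
  then obtain vs where vs: "vs \<noteq> []" "distinct vs" "hd vs = 0" "last vs = 1"
    "P = zip vs (tl vs)" "set P \<subseteq> Ek k" unfolding st_path_def by blast
  obtain w where w: "vs = 0 # w" using vs by (cases vs) auto
  obtain b w' where b: "w = b # w'" using vs w by (cases w) auto
  have b2: "2 \<le> b \<and> b < k+2" using vs w b by (auto simp: Ek_def Tk_def Bk_def)
  obtain c w'' where c: "w' = c # w''" using vs w b b2 by (cases w') auto
  have c1: "c = 1" using vs w b c b2 by (auto simp: Ek_def Tk_def Bk_def)
  have "w'' = []"
  proof (cases w'')
    case (Cons d x) then show ?thesis using vs w b c c1 by (auto simp: Ek_def Tk_def Bk_def)
  qed simp
  then show "\<exists>v. 2 \<le> v \<and> v < k+2 \<and> P = [(0,v),(v,1)]" using vs w b c c1 b2 by auto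
next
  assume "\<exists>v. 2 \<le> v \<and> v < k+2 \<and> P = [(0,v),(v,1)]"
  then obtain v where v: "2 \<le> v" "v < k+2" "P = [(0,v),(v,1)]" by blast
  show "st_path (Ek k) 0 1 P" unfolding st_path_def
    by (rule exI[of _ "[0,v,1]"]) (use v in \<open>auto simp: Ek_def Tk_def Bk_def\<close>)
qed

lemma fk_sub: "C \<subseteq> Bk k \<Longrightarrow> fk k c C = real (card C)"
  using TB_disj unfolding fk_def by (auto simp: Int_absorb2)

lemma fk_T: assumes "C \<subseteq> Bk k" "2 \<le> v" "v < k+2"
  shows "fk k c (insert (0,v) C) = c + real (card C)"
proof -
  have "(0,v) \<in> Tk k" using assms by (auto simp: Tk_def)
  moreover have "(0,v) \<notin> Bk k" by (auto simp: Bk_def)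
  moreover have "insert (0,v) C \<inter> Bk k = C" using assms(1) calculation(2) by auto
  ultimately show ?thesis unfolding fk_def by auto
qed

lemma ylen_path: "ylen C [(0,v),(v,1)] = (if (0,v) \<in> C then 1 else 0) + (if (v,1) \<in> C then 1 else 0)"
  by (simp add: ylen_def)

lemma reach_sub:
  assumes "(greedy_step (Ek k) 0 1 (fk k c))\<^sup>*\<^sup>* {} C" "c > 1"
  shows "C \<subseteq> Bk k"
  using assms(1)
proof (induction rule: rtranclp_induct)
  case base then show ?case by simp
next
  case (step C C')
  from step.hyps(2) obtain P e where sp: "shortest_st_path (Ek k) 0 1 C P" and yl: "ylen C P < 1"
    and eP: "e \<in> set P" and mn: "\<forall>e'\<in>set P. marginal (fk k c) e C \<le> marginal (fk k c) e' C"
    and C': "C' = insert e C" unfolding greedy_step_def by blast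
  obtain v where v: "2 \<le> v" "v < k+2" "P = [(0,v),(v,1)]"
    using sp paths_k unfolding shortest_st_path_def by blast
  have nin: "(0,v) \<notin> C" "(v,1) \<notin> C" using yl v ylen_disj by fastforce+
  have vB: "(v,1) \<in> Bk k" using v by (auto simp: Bk_def)
  have fC: "fk k c C = card C" using fk_sub step.IH by blast
  have finC: "finite C" using step.IH finB finite_subset by blast
  have m1: "marginal (fk k c) (0,v) C = c" using fk_T[OF step.IH v(1,2)] fC by (simp add: marginal_def)
  have m2: "marginal (fk k c) (v,1) C = 1"
    using fk_sub[of "insert (v,1) C"] step.IH vB fC nin finC by (simp add: marginal_def)
  have "e = (v,1)"
  proof (rule ccontr)
    assume "e \<noteq> (v,1)"
    then have "e = (0,v)" using eP v by auto
    then show False using mn m1 m2 v assms(2) by auto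
  qed
  then show ?case using C' step.IH vB by auto
qed

lemma reach_all:
  assumes "S \<subseteq> Bk k" "c \<ge> 1"
  shows "(greedy_step (Ek k) 0 1 (fk k c))\<^sup>*\<^sup>* {} S"
proof -
  have "finite S" using assms finB finite_subset by blast
  then show ?thesis using assms(1)
  proof (induction S rule: finite_induct)
    case empty then show ?case by simp
  next
    case (insert x F)
    have FB: "F \<subseteq> Bk k" and xB: "x \<in> Bk k" using insert by auto
    obtain v where v: "2 \<le> v" "v < k+2" "x = (v,1)" using xB by (auto simp: Bk_def)
    let ?P = "[(0,v),(v,1)]"
    have p: "st_path (Ek k) 0 1 ?P" using paths_k v by blast
    have n0: "(0,v) \<notin> F" using FB by (auto simp: Bk_def)
    have y0: "ylen F ?P = 0" using n0 insert(2) v by (simp add: ylen_def)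
    have sp: "shortest_st_path (Ek k) 0 1 F ?P"
      unfolding shortest_st_path_def using p y0 ylen_nonneg by auto
    have fC: "fk k c F = card F" using fk_sub FB by blast
    have m1: "marginal (fk k c) (0,v) F = c" using fk_T[OF FB v(1,2)] fC by (simp add: marginal_def)
    have m2: "marginal (fk k c) (v,1) F = 1"
      using fk_sub[of "insert (v,1) F"] FB xB v fC insert(1,2) by (simp add: marginal_def)
    have "greedy_step (Ek k) 0 1 (fk k c) F (insert x F)"
      unfolding greedy_step_def
      apply (rule exI[of _ ?P], rule exI[of _ x])
      using sp y0 v m1 m2 assms(2) by auto
    then show ?case using insert FB by (meson rtranclp.rtrancl_into_rtrancl)
  qed
qed

lemma stops_B: "greedy_stops (Ek k) 0 1 (Bk k)"
  unfolding greedy_stops_def shortest_st_path_def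
proof
  assume "\<exists>P. (st_path (Ek k) 0 1 P \<and> (\<forall>Q. st_path (Ek k) 0 1 Q \<longrightarrow> ylen (Bk k) P \<le> ylen (Bk k) Q)) \<and> ylen (Bk k) P < 1"
  then obtain P where "st_path (Ek k) 0 1 P" "ylen (Bk k) P < 1" by blast
  then obtain v where v: "2 \<le> v" "v < k+2" "P = [(0,v),(v,1)]" using paths_k by blast
  have "(v,1) \<in> Bk k" using v by (auto simp: Bk_def)
  then show False using ylen_disj[OF \<open>ylen (Bk k) P < 1\<close>] v by auto
qed

lemma output_B: assumes "greedy_output (Ek k) 0 1 (fk k c) Ch" "c > 1" shows "Ch = Bk k"
proof -
  have sub: "Ch \<subseteq> Bk k" using reach_sub assms unfolding greedy_output_def by blast
  have st: "greedy_stops (Ek k) 0 1 Ch" using assms unfolding greedy_output_def by blast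
  show ?thesis
  proof (rule ccontr)
    assume "Ch \<noteq> Bk k"
    then obtain x where x: "x \<in> Bk k" "x \<notin> Ch" using sub by blast
    obtain v where v: "2 \<le> v" "v < k+2" "x = (v,1)" using x by (auto simp: Bk_def)
    let ?P = "[(0,v),(v,1)]"
    have p: "st_path (Ek k) 0 1 ?P" using paths_k v by blast
    have n0: "(0,v) \<notin> Ch" using sub by (auto simp: Bk_def)
    have y0: "ylen Ch ?P = 0" using n0 x v by (simp add: ylen_def)
    have "shortest_st_path (Ek k) 0 1 Ch ?P"
      unfolding shortest_st_path_def using p y0 ylen_nonneg by auto
    then show False using st y0 unfolding greedy_stops_def by auto
  qed
qed

lemma cut_inst: assumes "c > 0" shows "cut_instance {0..<k+2} (Ek k) 0 1 (fk k c)"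
  unfolding cut_instance_def
proof (intro conjI)
  show "Ek k \<subseteq> {0..<k+2} \<times> {0..<k+2}" by (auto simp: Ek_def Tk_def Bk_def)
  show "normalized_nonneg (Ek k) (fk k c)" using assms by (simp add: normalized_nonneg_def fk_def)
  show "monotone_setfun (Ek k) (fk k c)"
    unfolding monotone_setfun_def
  proof (intro allI impI)
    fix A B :: "(nat \<times> nat) set" assume AB: "A \<subseteq> B"
    have "card (A \<inter> Bk k) \<le> card (B \<inter> Bk k)" using AB finB by (meson card_mono finite_Int Int_mono order_refl)
    then show "fk k c A \<le> fk k c B" using AB assms unfolding fk_def by auto
  qed
  show "submodular (Ek k) (fk k c)"
    unfolding submodular_def
  proof (intro allI impI)
    fix A B :: "(nat \<times> nat) set"
    have e1: "(A \<union> B) \<inter> Bk k = (A \<inter> Bk k) \<union> (B \<inter> Bk k)" by auto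
    have e2: "(A \<inter> B) \<inter> Bk k = (A \<inter> Bk k) \<inter> (B \<inter> Bk k)" by auto
    have "card ((A \<union> B) \<inter> Bk k) + card ((A \<inter> B) \<inter> Bk k) = card (A \<inter> Bk k) + card (B \<inter> Bk k)"
      unfolding e1 e2 using card_Un_Int[of "A \<inter> Bk k" "B \<inter> Bk k"] finB by auto
    then have cc: "real (card ((A \<union> B) \<inter> Bk k)) + real (card ((A \<inter> B) \<inter> Bk k)) = real (card (A \<inter> Bk k)) + real (card (B \<inter> Bk k))"
      by (metis of_nat_add)
    have "(if (A \<union> B) \<inter> Tk k \<noteq> {} then c else 0) + (if (A \<inter> B) \<inter> Tk k \<noteq> {} then c else 0)
       \<le> (if A \<inter> Tk k \<noteq> {} then c else 0) + (if B \<inter> Tk k \<noteq> {} then c else 0)"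
      using assms by auto
    then show "fk k c (A \<union> B) + fk k c (A \<inter> B) \<le> fk k c A + fk k c B"
      using cc unfolding fk_def by linarith
  qed
qed auto


lemma cut_T: "st_cut (Ek k) 0 1 (Tk k)"
  unfolding st_cut_def using paths_k by (fastforce simp: Ek_def Tk_def)
lemma cut_B: "st_cut (Ek k) 0 1 (Bk k)"
  unfolding st_cut_def using paths_k by (fastforce simp: Ek_def Bk_def)

lemma fT: "k \<ge> 1 \<Longrightarrow> fk k c (Tk k) = c"
  using TB_disj unfolding fk_def by (auto simp: Tk_def)
lemma fB: "fk k c (Bk k) = k"
  using fk_sub[of "Bk k"] cardB by simp

lemma cut_lb: assumes "st_cut (Ek k) 0 1 C" "c > 0" shows "min c (real k) \<le> fk k c C"
proof (cases "C \<inter> Tk k = {}")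
  case False then show ?thesis unfolding fk_def by auto
next
  case True
  have "Bk k \<subseteq> C"
  proof
    fix x assume "x \<in> Bk k"
    then obtain v where v: "2 \<le> v" "v < k+2" "x = (v,1)" by (auto simp: Bk_def)
    have "st_path (Ek k) 0 1 [(0,v),(v,1)]" using paths_k v by blast
    then have "set [(0,v),(v,1)] \<inter> C \<noteq> {}" using assms(1) unfolding st_cut_def by blast
    moreover have "(0,v) \<notin> C" using True v by (auto simp: Tk_def)
    ultimately show "x \<in> C" using v by auto
  qed
  then have "C \<inter> Bk k = Bk k" by auto
  then show ?thesis using cardB True unfolding fk_def by simp
qed

lemma part2: assumes "k \<ge> 1" "(\<epsilon>::real) > 0"
  shows "\<exists>(V :: nat set) E s t f Cstar.
         cut_instance V E s t f \<and> min_st_cut E s t f Cstar \<and> f Cstar > 0 \<and>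
         (\<exists>Ch. greedy_output E s t f Ch) \<and>
         (\<forall>Ch. greedy_output E s t f Ch \<longrightarrow>
                card Ch = k \<and> f Ch \<ge> (real k - \<epsilon>) * f Cstar)"
proof -
  define c where "c = 1 + \<epsilon> / real k"
  have kpos: "real k > 0" using assms by simp
  have c1: "c > 1" using assms kpos unfolding c_def by simp
  define Cs where "Cs = (if c \<le> real k then Tk k else Bk k)"
  have fCs: "fk k c Cs = min c (real k)" unfolding Cs_def using fT[OF assms(1)] fB by auto
  have cutCs: "st_cut (Ek k) 0 1 Cs" unfolding Cs_def using cut_T cut_B by auto
  have minc: "min_st_cut (Ek k) 0 1 (fk k c) Cs"
    unfolding min_st_cut_def using cutCs cut_lb c1 fCs by auto
  have pos: "fk k c Cs > 0" using fCs c1 kpos by simp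
  have ex: "greedy_output (Ek k) 0 1 (fk k c) (Bk k)"
    unfolding greedy_output_def using reach_all[OF order_refl, where c=c and k=k] c1 stops_B by auto
  have ineq: "(real k - \<epsilon>) * min c (real k) \<le> real k"
  proof (cases "c \<le> real k")
    case True
    have "(real k - \<epsilon>) * c = real k - \<epsilon> * \<epsilon> / real k"
      unfolding c_def using kpos by (simp add: field_simps)
    moreover have "\<epsilon> * \<epsilon> / real k \<ge> 0" using kpos assms by simp
    ultimately show ?thesis using True by simp
  next
    case False
    have m: "min c (real k) = real k" using False by simp
    have "\<epsilon> / real k > real k - 1" using False unfolding c_def by simp
    then have "\<epsilon> > (real k - 1) * real k" using kpos by (simp add: field_simps)
    moreover have "(real k - 1) * (real k - 1) \<ge> 0" by simp
    ultimately have le1: "real k - \<epsilon> \<le> 1" by (simp add: algebra_simps)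
    have "(real k - \<epsilon>) * real k \<le> 1 * real k"
      using le1 kpos by (intro mult_right_mono) auto
    then show ?thesis unfolding m by simp
  qed
  have "\<forall>Ch. greedy_output (Ek k) 0 1 (fk k c) Ch \<longrightarrow>
                card Ch = k \<and> fk k c Ch \<ge> (real k - \<epsilon>) * fk k c Cs"
  proof (intro allI impI)
    fix Ch assume "greedy_output (Ek k) 0 1 (fk k c) Ch"
    then have "Ch = Bk k" using output_B[OF _ c1] by blast
    then show "card Ch = k \<and> fk k c Ch \<ge> (real k - \<epsilon>) * fk k c Cs"
      using cardB fB fCs ineq by simp
  qed
  then show ?thesis using cut_inst[of c k] c1 minc pos ex by (intro exI) auto
qed

theorem lemma8:
  shows
  "(\<forall>(V :: 'v set) E s t f Cstar Ch.
      cut_instance V E s t f \<longrightarrow> min_st_cut E s t f Cstar \<longrightarrow> greedy_output E s t f Ch \<longrightarrow>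
      f Ch \<le> real (card Ch) * f Cstar)
   \<and>
   (\<forall>k :: nat. \<forall>\<epsilon> :: real. k \<ge> 1 \<longrightarrow> \<epsilon> > 0 \<longrightarrow>
      (\<exists>(V :: nat set) E s t f Cstar.
         cut_instance V E s t f \<and> min_st_cut E s t f Cstar \<and> f Cstar > 0 \<and>
         (\<exists>Ch. greedy_output E s t f Ch) \<and>
         (\<forall>Ch. greedy_output E s t f Ch \<longrightarrow>
                card Ch = k \<and> f Ch \<ge> (real k - \<epsilon>) * f Cstar)))"
proof (intro conjI allI impI)
  fix V :: "'v set" and E s t f Cstar Ch
  assume a: "cut_instance V E s t f" "min_st_cut E s t f Cstar" "greedy_output E s t f Ch"
  show "f Ch \<le> real (card Ch) * f Cstar"
    using part1[OF a(1,2)] a(3) unfolding greedy_output_def by blast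
next
  fix k :: nat and \<epsilon> :: real
  assume "k \<ge> 1" "\<epsilon> > 0"
  then show "\<exists>(V :: nat set) E s t f Cstar.
         cut_instance V E s t f \<and> min_st_cut E s t f Cstar \<and> f Cstar > 0 \<and>
         (\<exists>Ch. greedy_output E s t f Ch) \<and>
         (\<forall>Ch. greedy_output E s t f Ch \<longrightarrow>
                card Ch = k \<and> f Ch \<ge> (real k - \<epsilon>) * f Cstar)"
    by (rule part2)
qed

end
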